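(* Let $n\ge1$, suppose $\mathcal M$ is injective on $\Omega$, and let $W=(w_1,u_1,\dots,w_n,u_n,\sigma)\in\Omega$ and $M=\mathcal M(W)$. Define $$g(u;W)=\Delta_{2n+1}(u,\sigma)-\sum_{j=0}^{2n}a_j(M)\Delta_j(u,\sigma).$$ Then there is a real number $\tilde u(W)$ such that $$g(u;W)=(u-u_1)^2\cdots(u-u_n)^2(u-\tilde u(W)).$$
   Context: Let $\mathcal K:\mathbb R\to[0,\infty)$ be a kernel with $\mathfrak m_j:=\int_{\mathbb R}\xi^j\mathcal K(\xi)\,d\xi<\infty$ for all $j$; normalized: $\mathfrak m_0=1,\mathfrak m_1=0,\mathfrak m_2=1$. Let $\Delta_j(u,\sigma)=\int\xi^j\frac1\sigma\mathcal K(\frac{\xi-u}{\sigma})d\xi=\sum_{k=0}^j\binom jk\mathfrak m_k\sigma^ku^{j-k}$, a polynomial in $u$. For $W=(w_1,u_1,\dots,w_n,u_n,\sigma)$, $\mathcal M(W)=(M_0,\dots,M_{2n})^T$ with $M_j=\sum_{i=1}^nw_i\Delta_j(u_i,\sigma)$; $\Omega=\{W:w_i>0\ \forall i,\ u_1<\dots<u_n,\ \sigma>0\}$. On $\mathcal M(\Omega)$, $\mathcal M_{2n+1}(M)=\sum_iw_i\Delta_{2n+1}(u_i,\sigma)$ with $W=\mathcal M^{-1}(M)$, and $a_j(M)=\partial\mathcal M_{2n+1}/\partial M_j$, $j=0,\dots,2n$. *)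

theory Defs
  imports "HOL-Analysis.Analysis"
begin

definition kmom :: "(real \<Rightarrow> real) \<Rightarrow> nat \<Rightarrow> real" where
  "kmom K k = (\<integral>\<xi>. \<xi> ^ k * K \<xi> \<partial>lborel)"

definition Delta :: "(real \<Rightarrow> real) \<Rightarrow> nat \<Rightarrow> real \<Rightarrow> real \<Rightarrow> real" where
  "Delta K j u \<sigma> = (\<Sum>k=0..j. real (j choose k) * kmom K k * \<sigma> ^ k * u ^ (j - k))"

text \<open>Parameters W = (w, u, sigma); w i, u i meaningful for i in {1..n},
  and fixed to 0 outside {1..n} so that the parameter space is a faithful copy of R^(2n+1).\<close>
type_synonym param = "(nat \<Rightarrow> real) \<times> (nat \<Rightarrow> real) \<times> real"

definition Omega :: "nat \<Rightarrow> param set" where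
  "Omega n = {(w, u, \<sigma>). (\<forall>i\<in>{1..n}. w i > 0) \<and>
                         (\<forall>i\<in>{1..n}. \<forall>i'\<in>{1..n}. i < i' \<longrightarrow> u i < u i') \<and> \<sigma> > 0 \<and>
                         (\<forall>i. i \<notin> {1..n} \<longrightarrow> w i = 0 \<and> u i = 0)}"

definition Mmap :: "(real \<Rightarrow> real) \<Rightarrow> nat \<Rightarrow> param \<Rightarrow> (nat \<Rightarrow> real)" where
  "Mmap K n W = (case W of (w, u, \<sigma>) \<Rightarrow>
      (\<lambda>j. if j \<le> 2 * n then (\<Sum>i=1..n. w i * Delta K j (u i) \<sigma>) else 0))"

definition Mnext :: "(real \<Rightarrow> real) \<Rightarrow> nat \<Rightarrow> (nat \<Rightarrow> real) \<Rightarrow> real" where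
  "Mnext K n M = (case the_inv_into (Omega n) (Mmap K n) M of (w, u, \<sigma>) \<Rightarrow>
      (\<Sum>i=1..n. w i * Delta K (2 * n + 1) (u i) \<sigma>))"

definition acoef :: "(real \<Rightarrow> real) \<Rightarrow> nat \<Rightarrow> (nat \<Rightarrow> real) \<Rightarrow> nat \<Rightarrow> real" where
  "acoef K n M j = deriv (\<lambda>t. Mnext K n (M(j := M j + t))) 0"

text \<open>(Frechet) differentiability of F : R^N -> R at M, where R^N is the set of
  nat-indexed vectors supported on {0..<N}, with the Euclidean norm.\<close>
definition diff_at :: "nat \<Rightarrow> ((nat \<Rightarrow> real) \<Rightarrow> real) \<Rightarrow> (nat \<Rightarrow> real) \<Rightarrow> bool" where
  "diff_at N F M \<longleftrightarrow> (\<exists>c::nat \<Rightarrow> real. \<forall>\<epsilon>>0. \<exists>\<delta>>0. \<forall>h::nat \<Rightarrow> real.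
      (\<forall>j\<ge>N. h j = 0) \<longrightarrow> sqrt (\<Sum>j<N. (h j)^2) < \<delta> \<longrightarrow>
      \<bar>F (\<lambda>j. M j + h j) - F M - (\<Sum>j<N. c j * h j)\<bar> \<le> \<epsilon> * sqrt (\<Sum>j<N. (h j)^2))"

definition gfun :: "(real \<Rightarrow> real) \<Rightarrow> nat \<Rightarrow> param \<Rightarrow> real \<Rightarrow> real" where
  "gfun K n W x = (case W of (w, u, \<sigma>) \<Rightarrow>
      Delta K (2 * n + 1) x \<sigma> - (\<Sum>j=0..2*n. acoef K n (Mmap K n W) j * Delta K j x \<sigma>))"

end

theory Submission
  imports Defs "HOL-Computational_Algebra.Polynomial"
begin

lemma pderiv_sum_gen: "finite A \<Longrightarrow> pderiv (\<Sum>i\<in>A. f i) = (\<Sum>i\<in>A. pderiv (f i))"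
  by (induction A rule: finite_induct) (simp_all add: pderiv_add)

lemma chain_lemma:
  fixes F :: "(nat \<Rightarrow> real) \<Rightarrow> real" and G :: "real \<Rightarrow> nat \<Rightarrow> real"
  assumes dif: "\<forall>\<epsilon>>0. \<exists>\<delta>>0. \<forall>h::nat \<Rightarrow> real.
      (\<forall>j\<ge>N. h j = 0) \<longrightarrow> sqrt (\<Sum>j<N. (h j)^2) < \<delta> \<longrightarrow>
      \<bar>F (\<lambda>j. M j + h j) - F M - (\<Sum>j<N. c j * h j)\<bar> \<le> \<epsilon> * sqrt (\<Sum>j<N. (h j)^2)"
    and G0: "G 0 = M" and Gout: "\<And>t j. j \<ge> N \<Longrightarrow> G t j = M j"
    and Gder: "\<And>j. j < N \<Longrightarrow> ((\<lambda>t. G t j) has_real_derivative G' j) (at 0)"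
    and Phi_ev: "eventually (\<lambda>t. F (G t) = \<Phi> t) (at 0)" and Phi0: "\<Phi> 0 = F M"
    and Phider: "(\<Phi> has_real_derivative \<Phi>') (at 0)"
  shows "\<Phi>' = (\<Sum>j<N. c j * G' j)"
proof -
  define L where "L = \<Phi>' - (\<Sum>j<N. c j * G' j)"
  define R where "R = sqrt (\<Sum>j<N. (G' j)^2)"
  define q where "q t = (\<Phi> t - \<Phi> 0)/(t - 0) - (\<Sum>j<N. c j * ((G t j - G 0 j)/(t - 0)))" for t
  define r where "r t = sqrt (\<Sum>j<N. ((G t j - G 0 j)/(t - 0))^2)" for t
  have q_lim: "(q \<longlongrightarrow> L) (at 0)"
    unfolding q_def L_def
    apply (intro tendsto_intros)
    using Phider Gder by (simp_all add: has_field_derivative_iff)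
  have r_lim: "(r \<longlongrightarrow> R) (at 0)"
    unfolding r_def R_def
    apply (intro tendsto_intros)
    using Gder by (simp_all add: has_field_derivative_iff)
  have G_cont: "((\<lambda>t. G t j) \<longlongrightarrow> M j) (at 0)" if "j < N" for j
    using DERIV_isCont[OF Gder[OF that]] G0 by (simp add: isCont_def)
  have "((\<lambda>t. sqrt (\<Sum>j<N. (G t j - M j)^2)) \<longlongrightarrow> sqrt (\<Sum>j<N. (M j - M j)^2)) (at 0)"
    by (intro tendsto_intros G_cont) simp
  then have s_lim: "((\<lambda>t. sqrt (\<Sum>j<N. (G t j - M j)^2)) \<longlongrightarrow> 0) (at 0)" by simp
  have key: "\<bar>L\<bar> \<le> \<epsilon> * R" if "\<epsilon> > 0" for \<epsilon>
  proof -
    from dif that obtain \<delta> where \<delta>: "\<delta> > 0" and hd: "\<forall>h::nat \<Rightarrow> real.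
      (\<forall>j\<ge>N. h j = 0) \<longrightarrow> sqrt (\<Sum>j<N. (h j)^2) < \<delta> \<longrightarrow>
      \<bar>F (\<lambda>j. M j + h j) - F M - (\<Sum>j<N. c j * h j)\<bar> \<le> \<epsilon> * sqrt (\<Sum>j<N. (h j)^2)"
      by blast
    have ev1: "eventually (\<lambda>t. sqrt (\<Sum>j<N. (G t j - M j)^2) < \<delta>) (at 0)"
      using order_tendstoD(2)[OF s_lim \<delta>] .
    have ev0: "eventually (\<lambda>t::real. t \<noteq> 0) (at 0)" by (simp add: eventually_at_filter)
    have "eventually (\<lambda>t. \<bar>q t\<bar> \<le> \<epsilon> * r t) (at 0)"
      using ev0 ev1 Phi_ev
    proof eventually_elim
      case (elim t)
      define h where "h j = G t j - M j" for j
      have h1: "\<forall>j\<ge>N. h j = 0" using Gout by (simp add: h_def)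
      have h2: "(\<lambda>j. M j + h j) = G t" by (auto simp: h_def)
      have hs: "sqrt (\<Sum>j<N. (h j)^2) < \<delta>" using elim(2) by (simp add: h_def)
      have "\<bar>F (\<lambda>j. M j + h j) - F M - (\<Sum>j<N. c j * h j)\<bar> \<le> \<epsilon> * sqrt (\<Sum>j<N. (h j)^2)"
        using hd h1 hs by blast
      then have "\<bar>F (G t) - F M - (\<Sum>j<N. c j * h j)\<bar> \<le> \<epsilon> * sqrt (\<Sum>j<N. (h j)^2)"
        by (simp only: h2)
      then have A: "\<bar>\<Phi> t - \<Phi> 0 - (\<Sum>j<N. c j * h j)\<bar> \<le> \<epsilon> * sqrt (\<Sum>j<N. (h j)^2)"
        using elim(3) Phi0 by simp
      have qt: "q t = (\<Phi> t - \<Phi> 0 - (\<Sum>j<N. c j * h j)) / t"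
      proof -
        have "(\<Sum>j<N. c j * ((G t j - G 0 j)/(t - 0))) = (\<Sum>j<N. c j * h j)/t"
          by (simp add: h_def G0 sum_divide_distrib)
        then show ?thesis by (simp add: q_def diff_divide_distrib)
      qed
      have "(\<Sum>j<N. ((G t j - G 0 j)/(t - 0))^2) = (\<Sum>j<N. (h j)^2) / t^2"
        unfolding h_def using G0 by (simp add: power_divide sum_divide_distrib)
      then have rt: "r t = sqrt (\<Sum>j<N. (h j)^2) / \<bar>t\<bar>"
        unfolding r_def by (simp add: real_sqrt_divide)
      have "\<bar>q t\<bar> = \<bar>\<Phi> t - \<Phi> 0 - (\<Sum>j<N. c j * h j)\<bar> / \<bar>t\<bar>" by (simp add: qt abs_divide)
      also have "\<dots> \<le> \<epsilon> * sqrt (\<Sum>j<N. (h j)^2) / \<bar>t\<bar>"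
        using A by (simp add: divide_right_mono)
      also have "\<dots> = \<epsilon> * r t" by (simp add: rt)
      finally show ?case .
    qed
    moreover have "((\<lambda>t. \<epsilon> * r t) \<longlongrightarrow> \<epsilon> * R) (at 0)" by (intro tendsto_intros r_lim)
    moreover have "((\<lambda>t. \<bar>q t\<bar>) \<longlongrightarrow> \<bar>L\<bar>) (at 0)" by (intro tendsto_intros q_lim)
    ultimately show ?thesis
      using tendsto_le[of "at (0::real)" "\<lambda>t. \<epsilon> * r t" "\<epsilon> * R" "\<lambda>t. \<bar>q t\<bar>" "\<bar>L\<bar>"] by simp
  qed
  have "L = 0"
  proof (rule ccontr)
    assume "L \<noteq> 0"
    have R0: "R \<ge> 0" by (simp add: R_def sum_nonneg)
    define \<epsilon> where "\<epsilon> = \<bar>L\<bar> / (2 * (R + 1))"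
    have "\<epsilon> > 0" using \<open>L \<noteq> 0\<close> R0 by (simp add: \<epsilon>_def)
    then have "\<bar>L\<bar> \<le> \<epsilon> * R" by (rule key)
    also have "\<epsilon> * R < \<bar>L\<bar>"
    proof -
      have A: "0 \<le> R * \<bar>L\<bar>" using R0 by simp
      have B: "0 < \<bar>L\<bar>" using \<open>L \<noteq> 0\<close> by simp
      show ?thesis unfolding \<epsilon>_def using R0 by (simp add: field_simps) (use A B in linarith)
    qed
    finally show False by simp
  qed
  then show ?thesis by (simp add: L_def)
qed


definition Dpoly :: "(real \<Rightarrow> real) \<Rightarrow> nat \<Rightarrow> real \<Rightarrow> real poly" where
  "Dpoly K j \<sigma> = (\<Sum>k=0..j. monom (real (j choose k) * kmom K k * \<sigma> ^ k) (j - k))"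

lemma poly_Dpoly: "poly (Dpoly K j \<sigma>) x = Delta K j x \<sigma>"
  by (simp add: Dpoly_def Delta_def poly_sum poly_monom)

lemma coeff_Dpoly_gt: "m > j \<Longrightarrow> coeff (Dpoly K j \<sigma>) m = 0"
  unfolding Dpoly_def coeff_sum coeff_monom by (intro sum.neutral) auto

lemma coeff_Dpoly_eq: "coeff (Dpoly K j \<sigma>) j = kmom K 0"
proof -
  have "coeff (Dpoly K j \<sigma>) j = (\<Sum>k=0..j. if k = 0 then real (j choose k) * kmom K k * \<sigma> ^ k else 0)"
    unfolding Dpoly_def coeff_sum coeff_monom
    by (intro sum.cong) auto
  also have "\<dots> = kmom K 0" by (subst sum.delta) auto
  finally show ?thesis .
qed

lemma double_root:
  fixes p :: "real poly"
  assumes "poly p a = 0" "poly (pderiv p) a = 0"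
  shows "[:-a,1:]^2 dvd p"
proof -
  from assms(1) obtain q where q: "p = [:-a,1:] * q" by (auto simp: poly_eq_0_iff_dvd)
  have d1: "pderiv [:-a,1:] = 1" by (simp add: pderiv_pCons)
  have "pderiv p = pderiv [:-a,1:] * q + [:-a,1:] * pderiv q" by (simp only: q pderiv_mult add.commute mult.commute)
  then have "pderiv p = q + [:-a,1:] * pderiv q" by (simp only: d1 mult_1)
  then have "poly q a = 0" using assms(2) by simp
  then obtain q2 where q2: "q = [:-a,1:] * q2" by (auto simp: poly_eq_0_iff_dvd)
  have "p = [:-a,1:]^2 * q2" unfolding q q2 power2_eq_square by (simp only: mult.assoc)
  then show ?thesis by simp
qed

lemma prod_double_dvd:
  fixes p :: "real poly" and u :: "nat \<Rightarrow> real"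
  assumes "finite I" "inj_on u I" "\<forall>i\<in>I. poly p (u i) = 0 \<and> poly (pderiv p) (u i) = 0"
  shows "(\<Prod>i\<in>I. [:-u i,1:]^2) dvd p"
  using assms
proof (induction I rule: finite_induct)
  case empty
  then show ?case by simp
next
  case (insert a I)
  define Q where "Q = (\<Prod>i\<in>I. [:-u i,1:]^2)"
  have "Q dvd p" using insert by (simp add: Q_def)
  then obtain R where R: "p = Q * R" by (auto elim: dvdE)
  have Qa: "poly Q (u a) \<noteq> 0"
  proof -
    have "\<forall>i\<in>I. u a \<noteq> u i" using insert(2,4) by (auto simp: inj_on_def)
    then show ?thesis by (simp add: Q_def poly_prod insert(1))
  qed
  have pa: "poly p (u a) = 0" "poly (pderiv p) (u a) = 0" using insert(5) by auto
  have Ra: "poly R (u a) = 0" using pa(1) Qa by (simp add: R)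
  have "pderiv p = pderiv Q * R + Q * pderiv R" by (simp add: R pderiv_mult)
  then have "poly Q (u a) * poly (pderiv R) (u a) = 0" using pa(2) Ra by simp
  then have "poly (pderiv R) (u a) = 0" using Qa by simp
  then obtain R2 where "R = [:-u a,1:]^2 * R2" using double_root[OF Ra] by (auto elim: dvdE)
  then have "p = (\<Prod>i\<in>insert a I. [:-u i,1:]^2) * R2"
    using insert(1,2) by (simp add: R Q_def mult_ac)
  then show ?case by simp
qed

lemma sum_upd_split:
  fixes f :: "nat \<Rightarrow> real \<Rightarrow> real \<Rightarrow> real"
  assumes "i \<in> {1..n}"
  shows "(\<Sum>k=1..n. f k ((a(i := x)) k) (b k)) = f i x (b i) + (\<Sum>k\<in>{1..n}-{i}. f k (a k) (b k))"
proof -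
  have "(\<Sum>k=1..n. f k ((a(i := x)) k) (b k)) = f i x (b i) + (\<Sum>k\<in>{1..n}-{i}. f k ((a(i := x)) k) (b k))"
    using assms by (simp add: sum.remove)
  also have "(\<Sum>k\<in>{1..n}-{i}. f k ((a(i := x)) k) (b k)) = (\<Sum>k\<in>{1..n}-{i}. f k (a k) (b k))"
    by (intro sum.cong) auto
  finally show ?thesis .
qed

lemma sum_upd_split2:
  fixes f :: "nat \<Rightarrow> real \<Rightarrow> real \<Rightarrow> real"
  assumes "i \<in> {1..n}"
  shows "(\<Sum>k=1..n. f k (b k) ((a(i := x)) k)) = f i (b i) x + (\<Sum>k\<in>{1..n}-{i}. f k (b k) (a k))"
proof -
  have "(\<Sum>k=1..n. f k (b k) ((a(i := x)) k)) = f i (b i) x + (\<Sum>k\<in>{1..n}-{i}. f k (b k) ((a(i := x)) k))"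
    using assms by (simp add: sum.remove)
  also have "(\<Sum>k\<in>{1..n}-{i}. f k (b k) ((a(i := x)) k)) = (\<Sum>k\<in>{1..n}-{i}. f k (b k) (a k))"
    by (intro sum.cong) auto
  finally show ?thesis .
qed


lemma poly_shift_deriv: "((\<lambda>t. poly p (a + t)) has_real_derivative poly (pderiv p) a) (at 0)"
proof -
  have g: "((\<lambda>t. a + t) has_real_derivative 1) (at 0)" by (auto intro!: derivative_eq_intros)
  from DERIV_chain2[OF poly_DERIV[of p "a + 0"] g] show ?thesis by simp
qed

theorem proposition4p1:
  fixes K :: "real \<Rightarrow> real" and n :: nat
    and w u :: "nat \<Rightarrow> real" and \<sigma> :: real
  assumes K_nonneg: "\<And>\<xi>. K \<xi> \<ge> 0"
    and K_moments: "\<And>j. integrable lborel (\<lambda>\<xi>. \<xi> ^ j * K \<xi>)"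
    and m0: "kmom K 0 = 1" and m1: "kmom K 1 = 0" and m2: "kmom K 2 = 1"
    and n_ge: "n \<ge> 1"
    and inj: "inj_on (Mmap K n) (Omega n)"
    and W_in: "(w, u, \<sigma>) \<in> Omega n"
    and diff: "diff_at (2 * n + 1) (Mnext K n) (Mmap K n (w, u, \<sigma>))"
  shows "\<exists>ut::real. \<forall>x::real.
           gfun K n (w, u, \<sigma>) x = (\<Prod>i=1..n. (x - u i)^2) * (x - ut)"
proof -
  define N where "N = 2 * n + 1"
  define M where "M = Mmap K n (w, u, \<sigma>)"
  define F where "F = Mnext K n"
  obtain c where cN: "\<forall>\<epsilon>>0. \<exists>\<delta>>0. \<forall>h::nat \<Rightarrow> real.
      (\<forall>j\<ge>N. h j = 0) \<longrightarrow> sqrt (\<Sum>j<N. (h j)^2) < \<delta> \<longrightarrow>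
      \<bar>F (\<lambda>j. M j + h j) - F M - (\<Sum>j<N. c j * h j)\<bar> \<le> \<epsilon> * sqrt (\<Sum>j<N. (h j)^2)"
    using diff unfolding diff_at_def N_def M_def F_def by blast
  have FM: "F (Mmap K n (w', u', \<sigma>')) = (\<Sum>i=1..n. w' i * Delta K N (u' i) \<sigma>')"
    if "(w', u', \<sigma>') \<in> Omega n" for w' u' \<sigma>'
    unfolding F_def Mnext_def N_def using the_inv_into_f_f[OF inj that] by simp
  have wpos: "\<And>i. i \<in> {1..n} \<Longrightarrow> w i > 0"
    and uinc: "\<And>i i'. i \<in> {1..n} \<Longrightarrow> i' \<in> {1..n} \<Longrightarrow> i < i' \<Longrightarrow> u i < u i'"
    and spos: "\<sigma> > 0"
    and wout: "\<And>i. i \<notin> {1..n} \<Longrightarrow> w i = 0 \<and> u i = 0"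
    using W_in unfolding Omega_def by auto
  have MW: "M = Mmap K n (w, u, \<sigma>)" by (simp add: M_def)

  have ac: "acoef K n M j = c j" if jN: "j < N" for j
  proof -
    have "((\<lambda>t. F (M(j := M j + t))) has_real_derivative c j) (at 0)"
      unfolding has_field_derivative_iff tendsto_iff eventually_at
    proof (intro allI impI)
      fix e :: real assume "e > 0"
      then have "e / 2 > 0" by simp
      then obtain \<delta> where \<delta>: "\<delta> > 0" and hd: "\<forall>h::nat \<Rightarrow> real.
        (\<forall>k\<ge>N. h k = 0) \<longrightarrow> sqrt (\<Sum>k<N. (h k)^2) < \<delta> \<longrightarrow>
        \<bar>F (\<lambda>k. M k + h k) - F M - (\<Sum>k<N. c k * h k)\<bar> \<le> e / 2 * sqrt (\<Sum>k<N. (h k)^2)"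
        using cN by blast
      show "\<exists>d>0. \<forall>t\<in>UNIV. t \<noteq> 0 \<and> dist t 0 < d \<longrightarrow>
          dist ((F (M(j := M j + t)) - F (M(j := M j + 0))) / (t - 0)) (c j) < e"
      proof (intro exI[of _ \<delta>] conjI ballI impI)
        show "\<delta> > 0" by (rule \<delta>)
        fix t :: real assume t: "t \<noteq> 0 \<and> dist t 0 < \<delta>"
        define h where "h k = (if k = j then t else 0)" for k
        have h1: "\<forall>k\<ge>N. h k = 0" using jN by (auto simp: h_def)
        have "(\<Sum>k<N. (h k)^2) = (\<Sum>k<N. if k = j then t^2 else 0)"
          by (intro sum.cong) (auto simp: h_def)
        also have "\<dots> = t^2" using jN by simp
        finally have hs: "sqrt (\<Sum>k<N. (h k)^2) = \<bar>t\<bar>" by simp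
        have "(\<Sum>k<N. c k * h k) = (\<Sum>k<N. if k = j then c j * t else 0)"
          by (intro sum.cong) (auto simp: h_def)
        also have "\<dots> = c j * t" using jN by simp
        finally have hc: "(\<Sum>k<N. c k * h k) = c j * t" .
        have hM: "(\<lambda>k. M k + h k) = M(j := M j + t)" by (auto simp: h_def)
        have "\<bar>F (\<lambda>k. M k + h k) - F M - (\<Sum>k<N. c k * h k)\<bar> \<le> e / 2 * sqrt (\<Sum>k<N. (h k)^2)"
        proof -
          have "sqrt (\<Sum>k<N. (h k)^2) < \<delta>" using hs t by (simp add: dist_real_def)
          then show ?thesis using hd h1 by blast
        qed
        then have ineq: "\<bar>F (M(j := M j + t)) - F M - c j * t\<bar> \<le> e / 2 * \<bar>t\<bar>"
          by (simp only: hM hc hs)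
        have eq: "(F (M(j := M j + t)) - F (M(j := M j + 0))) / (t - 0) - c j
            = (F (M(j := M j + t)) - F M - c j * t) / t"
          using t by (simp add: field_simps)
        have "\<bar>(F (M(j := M j + t)) - F M - c j * t) / t\<bar> \<le> e / 2"
          using ineq t by (simp add: abs_divide divide_le_eq)
        then show "dist ((F (M(j := M j + t)) - F (M(j := M j + 0))) / (t - 0)) (c j) < e"
          using \<open>e > 0\<close> by (simp only: dist_real_def eq)
      qed
    qed
    then show ?thesis unfolding acoef_def F_def by (rule DERIV_imp_deriv)
  qed

  have ev0: "eventually (\<lambda>t::real. True) (at 0)" by simp
  have id_lim: "((\<lambda>t::real. t) \<longlongrightarrow> 0) (at 0)" by (rule tendsto_ident_at)

  have rootA: "Delta K N (u i) \<sigma> = (\<Sum>j<N. c j * Delta K j (u i) \<sigma>)" if i: "i \<in> {1..n}" for i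
  proof -
    define C where "C j = (\<Sum>k\<in>{1..n}-{i}. w k * Delta K j (u k) \<sigma>)" for j
    have Gt: "Mmap K n (w(i := w i + t), u, \<sigma>) j = (if j \<le> 2 * n then (w i + t) * Delta K j (u i) \<sigma> + C j else 0)" for t j
      using sum_upd_split[OF i, of "\<lambda>k a b. a * Delta K j b \<sigma>" w "w i + t" u]
      by (simp add: Mmap_def C_def)
    have Phit: "(\<Sum>k=1..n. (w(i := w i + t)) k * Delta K N (u k) \<sigma>) = (w i + t) * Delta K N (u i) \<sigma> + C N" for t
      using sum_upd_split[OF i, of "\<lambda>k a b. a * Delta K N b \<sigma>" w "w i + t" u]
      by (simp add: C_def)
    show ?thesis
    proof (rule chain_lemma[OF cN, where G="\<lambda>t. Mmap K n (w(i := w i + t), u, \<sigma>)"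
          and G'="\<lambda>j. Delta K j (u i) \<sigma>"
          and \<Phi>="\<lambda>t. (\<Sum>k=1..n. (w(i := w i + t)) k * Delta K N (u k) \<sigma>)"])
      show "Mmap K n (w(i := w i + 0), u, \<sigma>) = M" by (simp add: M_def)
      show "Mmap K n (w(i := w i + t), u, \<sigma>) j = M j" if "N \<le> j" for t j
        using that by (simp add: Gt M_def Mmap_def N_def)
      show "((\<lambda>t. Mmap K n (w(i := w i + t), u, \<sigma>) j) has_real_derivative Delta K j (u i) \<sigma>) (at 0)"
        if "j < N" for j
        using that unfolding Gt N_def by (auto intro!: derivative_eq_intros)
      have "eventually (\<lambda>t. 0 < w i + t) (at 0)"
        using order_tendstoD(1)[OF id_lim, of "- w i"] wpos[OF i]
        by (auto elim: eventually_mono)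
      then show "eventually (\<lambda>t. F (Mmap K n (w(i := w i + t), u, \<sigma>)) =
          (\<Sum>k=1..n. (w(i := w i + t)) k * Delta K N (u k) \<sigma>)) (at 0)"
      proof (rule eventually_mono)
        fix t assume t: "0 < w i + t"
        have "(w(i := w i + t), u, \<sigma>) \<in> Omega n"
          using W_in t i unfolding Omega_def by auto
        then show "F (Mmap K n (w(i := w i + t), u, \<sigma>)) =
          (\<Sum>k=1..n. (w(i := w i + t)) k * Delta K N (u k) \<sigma>)" by (rule FM)
      qed
      show "(\<Sum>k=1..n. (w(i := w i + 0)) k * Delta K N (u k) \<sigma>) = F M"
        using FM[OF W_in] by (simp add: M_def)
      show "((\<lambda>t. \<Sum>k=1..n. (w(i := w i + t)) k * Delta K N (u k) \<sigma>) has_real_derivative Delta K N (u i) \<sigma>) (at 0)"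
        unfolding Phit by (auto intro!: derivative_eq_intros)
    qed
  qed

  have rootB: "w i * poly (pderiv (Dpoly K N \<sigma>)) (u i) = (\<Sum>j<N. c j * (w i * poly (pderiv (Dpoly K j \<sigma>)) (u i)))"
    if i: "i \<in> {1..n}" for i
  proof -
    define C where "C j = (\<Sum>k\<in>{1..n}-{i}. w k * Delta K j (u k) \<sigma>)" for j
    have Gt: "Mmap K n (w, u(i := u i + t), \<sigma>) j = (if j \<le> 2 * n then w i * poly (Dpoly K j \<sigma>) (u i + t) + C j else 0)" for t j
      using sum_upd_split2[OF i, of "\<lambda>k a b. a * Delta K j b \<sigma>" w u "u i + t"]
      by (simp add: Mmap_def C_def poly_Dpoly)
    have Phit: "(\<Sum>k=1..n. w k * Delta K N ((u(i := u i + t)) k) \<sigma>) = w i * poly (Dpoly K N \<sigma>) (u i + t) + C N" for t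
      using sum_upd_split2[OF i, of "\<lambda>k a b. a * Delta K N b \<sigma>" w u "u i + t"]
      by (simp add: C_def poly_Dpoly)
    show ?thesis
    proof (rule chain_lemma[OF cN, where G="\<lambda>t. Mmap K n (w, u(i := u i + t), \<sigma>)"
          and G'="\<lambda>j. w i * poly (pderiv (Dpoly K j \<sigma>)) (u i)"
          and \<Phi>="\<lambda>t. (\<Sum>k=1..n. w k * Delta K N ((u(i := u i + t)) k) \<sigma>)"])
      show "Mmap K n (w, u(i := u i + 0), \<sigma>) = M" by (simp add: M_def)
      show "Mmap K n (w, u(i := u i + t), \<sigma>) j = M j" if "N \<le> j" for t j
        using that by (simp add: Gt M_def Mmap_def N_def)
      show "((\<lambda>t. Mmap K n (w, u(i := u i + t), \<sigma>) j) has_real_derivative w i * poly (pderiv (Dpoly K j \<sigma>)) (u i)) (at 0)"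
        if "j < N" for j
        using that unfolding Gt N_def
        by (auto intro!: derivative_eq_intros poly_shift_deriv)
      have evk: "eventually (\<lambda>t. (k < i \<longrightarrow> u k < u i + t) \<and> (i < k \<longrightarrow> u i + t < u k)) (at 0)"
        if k: "k \<in> {1..n}" for k
      proof -
        have e1: "eventually (\<lambda>t. k < i \<longrightarrow> u k < u i + t) (at 0)"
        proof (cases "k < i")
          case True
          then have "u k - u i < 0" using uinc[OF k i] by simp
          from order_tendstoD(1)[OF id_lim this] show ?thesis by (auto elim: eventually_mono)
        qed simp
        have e2: "eventually (\<lambda>t. i < k \<longrightarrow> u i + t < u k) (at 0)"
        proof (cases "i < k")
          case True
          then have "0 < u k - u i" using uinc[OF i k] by simp
          from order_tendstoD(2)[OF id_lim this] show ?thesis by (auto elim: eventually_mono)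
        qed simp
        from e1 e2 show ?thesis by (rule eventually_conj)
      qed
      have "eventually (\<lambda>t. \<forall>k\<in>{1..n}. (k < i \<longrightarrow> u k < u i + t) \<and> (i < k \<longrightarrow> u i + t < u k)) (at 0)"
        by (rule eventually_ball_finite) (use evk in auto)
      then show "eventually (\<lambda>t. F (Mmap K n (w, u(i := u i + t), \<sigma>)) =
          (\<Sum>k=1..n. w k * Delta K N ((u(i := u i + t)) k) \<sigma>)) (at 0)"
      proof (rule eventually_mono)
        fix t assume t: "\<forall>k\<in>{1..n}. (k < i \<longrightarrow> u k < u i + t) \<and> (i < k \<longrightarrow> u i + t < u k)"
        have ord: "(u(i := u i + t)) a < (u(i := u i + t)) b"
          if ab: "a \<in> {1..n}" "b \<in> {1..n}" "a < b" for a b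
        proof -
          consider "a = i" | "b = i" | "a \<noteq> i" "b \<noteq> i" by blast
          then show ?thesis
          proof cases
            case 1 then show ?thesis using t ab by auto
          next
            case 2 then show ?thesis using t ab by auto
          next
            case 3 then show ?thesis using uinc[OF ab] by simp
          qed
        qed
        have "(w, u(i := u i + t), \<sigma>) \<in> Omega n"
          using W_in i ord unfolding Omega_def by auto
        then show "F (Mmap K n (w, u(i := u i + t), \<sigma>)) =
          (\<Sum>k=1..n. w k * Delta K N ((u(i := u i + t)) k) \<sigma>)" by (rule FM)
      qed
      show "(\<Sum>k=1..n. w k * Delta K N ((u(i := u i + 0)) k) \<sigma>) = F M"
        using FM[OF W_in] by (simp add: M_def)
      show "((\<lambda>t. \<Sum>k=1..n. w k * Delta K N ((u(i := u i + t)) k) \<sigma>) has_real_derivative w i * poly (pderiv (Dpoly K N \<sigma>)) (u i)) (at 0)"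
        unfolding Phit by (auto intro!: derivative_eq_intros poly_shift_deriv)
    qed
  qed
  define P where "P = Dpoly K N \<sigma> - (\<Sum>j<N. smult (c j) (Dpoly K j \<sigma>))"
  have polyP: "poly P x = Delta K N x \<sigma> - (\<Sum>j<N. c j * Delta K j x \<sigma>)" for x
    by (simp add: P_def poly_sum poly_Dpoly)
  have dP: "poly (pderiv P) x = poly (pderiv (Dpoly K N \<sigma>)) x - (\<Sum>j<N. c j * poly (pderiv (Dpoly K j \<sigma>)) x)" for x
    by (simp add: P_def pderiv_diff pderiv_sum_gen pderiv_smult poly_sum)
  have roots: "\<forall>i\<in>{1..n}. poly P (u i) = 0 \<and> poly (pderiv P) (u i) = 0"
  proof
    fix i assume i: "i \<in> {1..n}"
    have "poly P (u i) = 0" using rootA[OF i] by (simp add: polyP)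
    moreover have "w i * poly (pderiv P) (u i) = 0"
      using rootB[OF i] by (simp add: dP right_diff_distrib sum_distrib_left mult_ac)
    then have "poly (pderiv P) (u i) = 0" using wpos[OF i] by simp
    ultimately show "poly P (u i) = 0 \<and> poly (pderiv P) (u i) = 0" by simp
  qed
  have injU: "inj_on u {1..n}"
  proof (rule inj_onI)
    fix a b assume ab: "a \<in> {1..n}" "b \<in> {1..n}" "u a = u b"
    show "a = b"
    proof (rule ccontr)
      assume "a \<noteq> b"
      then consider "a < b" | "b < a" by linarith
      then show False using uinc ab by cases force+
    qed
  qed
  define Q where "Q = (\<Prod>i\<in>{1..n}. [:-u i,1:]^2)"
  have "Q dvd P" unfolding Q_def by (rule prod_double_dvd[OF _ injU roots]) simp
  then obtain R where PQR: "P = Q * R" by (auto elim: dvdE)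
  have coeffP: "coeff P m = coeff (Dpoly K N \<sigma>) m - (\<Sum>j<N. c j * coeff (Dpoly K j \<sigma>) m)" for m
    by (simp add: P_def coeff_sum)
  have cPN: "coeff P N = 1"
  proof -
    have "(\<Sum>j<N. c j * coeff (Dpoly K j \<sigma>) N) = 0"
      by (intro sum.neutral) (auto simp: coeff_Dpoly_gt)
    then show ?thesis by (simp add: coeffP coeff_Dpoly_eq m0)
  qed
  have cPgt: "coeff P m = 0" if "m > N" for m
  proof -
    have "(\<Sum>j<N. c j * coeff (Dpoly K j \<sigma>) m) = 0"
      using that by (intro sum.neutral) (auto simp: coeff_Dpoly_gt)
    then show ?thesis using that by (simp add: coeffP coeff_Dpoly_gt)
  qed
  have degP: "degree P = N"
  proof (rule antisym)
    show "degree P \<le> N" using cPgt by (intro degree_le) auto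
    show "N \<le> degree P" using cPN by (intro le_degree) simp
  qed
  have lcP: "lead_coeff P = 1" using degP cPN by simp
  have P0: "P \<noteq> 0" using lcP by auto
  have Qnz: "Q \<noteq> 0" unfolding Q_def by (simp add: prod_zero_iff)
  have Rnz: "R \<noteq> 0" using P0 PQR by auto
  have degQ: "degree Q = 2 * n"
  proof -
    have "degree Q = (\<Sum>i\<in>{1..n}. degree ([:-u i,1:]^2))"
      unfolding Q_def by (rule degree_prod_sum_eq) simp
    also have "\<dots> = (\<Sum>i\<in>{1..n}. 2)" by (intro sum.cong) (simp_all add: degree_power_eq)
    finally show ?thesis by simp
  qed
  have lcQ: "lead_coeff Q = 1" unfolding Q_def by (simp add: lead_coeff_prod lead_coeff_power)
  have degR: "degree R = 1" using degree_mult_eq[OF Qnz Rnz] PQR degP degQ by (simp add: N_def)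
  have lcR: "lead_coeff R = 1" using lead_coeff_mult[of Q R] PQR lcP lcQ by simp
  have polyR: "poly R x = coeff R 0 + x" for x
    using degR lcR by (simp add: poly_altdef)
  have polyQ: "poly Q x = (\<Prod>i=1..n. (x - u i)^2)" for x
    unfolding Q_def by (simp add: poly_prod)
  have gf: "gfun K n (w, u, \<sigma>) x = poly P x" for x
  proof -
    have set: "{0..2*n} = {..<N}" by (auto simp: N_def)
    have "(\<Sum>j=0..2*n. acoef K n (Mmap K n (w, u, \<sigma>)) j * Delta K j x \<sigma>) = (\<Sum>j<N. c j * Delta K j x \<sigma>)"
      unfolding set MW[symmetric] by (intro sum.cong) (simp_all add: ac)
    then show ?thesis by (simp add: gfun_def polyP N_def)
  qed
  show ?thesis
  proof (intro exI allI)
    fix x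
    show "gfun K n (w, u, \<sigma>) x = (\<Prod>i=1..n. (x - u i)^2) * (x - (- coeff R 0))"
      by (simp add: gf PQR polyQ polyR)
  qed
qed

end
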